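(* In the finite-inventory setting described in the context, for every season $n$ and period $t\in\{1,\dots,T\}$, \[ |\Delta_t^n|\le 2\|\widehat V_n-V^*\|_\infty+(T-t+1)\,R_{\max}\,\delta_n . \]
   Context: States are $x=(s,t)$ with $s\in\{0,\dots,C\}$, $t\in\{1,\dots,T+1\}$; $\mathcal{X}$ is the set of all states with $t\le T+1$. From state $(s,t)$, a price $p\in[p_l,p_h]$ ($0<p_l<p_h$) yields sales $q\in\{0,\dots,s\}$ with true probability $P(q\mid s,p)$, reward $pq$, next state $(s-q,t+1)$. $R_{\max}=p_hC$. $V^*(s,T+1)=0$, $V^*(s,t)=\max_{p}\sum_{q=0}^sP(q\mid s,p)[pq+V^*(s-q,t+1)]$. For season $n$, $\widehat P_n(\cdot\mid s,p)$ is an estimated sales distribution on $\{0,\dots,s\}$ (obtained by discretizing a Gaussian with the GP posterior mean and variance at $p$), $\widehat V_n(s,T+1)=0$, $\widehat V_n(s,t)=\max_{p}\sum_{q=0}^s\widehat P_n(q\mid s,p)[pq+\widehat V_n(s-q,t+1)]$, and the policy $\psi$ in season $n$ selects at $(s,t)$ a price attaining this maximum. $\|\widehat V_n-V^*\|_\infty=\max_{x\in\mathcal{X}}|\widehat V_n(x)-V^*(x)|$, and $\delta_n=\sup_{(s,t)\in\mathcal{X},\,p\in[p_l,p_h]}\|\widehat P_n(\cdot\mid s,p)-P(\cdot\mid s,p)\|_1$. In season $n$, the random states $X_t^n=(S_t^n,t)$ evolve under $P$ with prices from $\psi$, starting at $X_1^n=(C,1)$, with rewards $r_t^n$; $\mathbb{E}_\psi$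 is the corresponding expectation, and $\Delta_t^n=\mathbb{E}_\psi\big[V^*(X_t^n)-\mathbb{E}_\psi[r_t^n+V^*(X_{t+1}^n)\mid X_t^n]\big]$. *)

theory Defs
  imports "HOL-Probability.Probability"
begin

text \<open>Sales model: Pm s p is the sales distribution on {0..s} at inventory s and price p.
  Value function with k remaining periods (k = T+1-t), i.e. value at state (s,t).\<close>

fun vfun :: "(nat \<Rightarrow> real \<Rightarrow> nat pmf) \<Rightarrow> real \<Rightarrow> real \<Rightarrow> nat \<Rightarrow> nat \<Rightarrow> real" where
  "vfun Pm pl ph 0 s = 0"
| "vfun Pm pl ph (Suc k) s =
     (SUP p\<in>{pl..ph}. measure_pmf.expectation (Pm s p)
        (\<lambda>q. p * real q + vfun Pm pl ph k (s - q)))"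

definition Vval :: "(nat \<Rightarrow> real \<Rightarrow> nat pmf) \<Rightarrow> real \<Rightarrow> real \<Rightarrow> nat \<Rightarrow> nat \<Rightarrow> nat \<Rightarrow> real" where
  "Vval Pm pl ph T s t = vfun Pm pl ph (T + 1 - t) s"

definition Qval :: "(nat \<Rightarrow> real \<Rightarrow> nat pmf) \<Rightarrow> (nat \<Rightarrow> nat \<Rightarrow> real) \<Rightarrow> nat \<Rightarrow> nat \<Rightarrow> real \<Rightarrow> real" where
  "Qval Pm V s t p = measure_pmf.expectation (Pm s p) (\<lambda>q. p * real q + V (s - q) (t + 1))"

text \<open>Distribution of the inventory S_{k+1} under the true model P and policy psi, S_1 = C.\<close>
primrec sdist :: "(nat \<Rightarrow> real \<Rightarrow> nat pmf) \<Rightarrow> (nat \<Rightarrow> nat \<Rightarrow> real) \<Rightarrow> nat \<Rightarrow> nat \<Rightarrow> nat pmf" where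
  "sdist P psi C 0 = return_pmf C"
| "sdist P psi C (Suc k) =
     bind_pmf (sdist P psi C k) (\<lambda>s. map_pmf (\<lambda>q. s - q) (P s (psi s (Suc k))))"

definition Sdist :: "(nat \<Rightarrow> real \<Rightarrow> nat pmf) \<Rightarrow> (nat \<Rightarrow> nat \<Rightarrow> real) \<Rightarrow> nat \<Rightarrow> nat \<Rightarrow> nat pmf" where
  "Sdist P psi C t = sdist P psi C (t - 1)"

definition Delta :: "(nat \<Rightarrow> real \<Rightarrow> nat pmf) \<Rightarrow> real \<Rightarrow> real \<Rightarrow> nat \<Rightarrow> nat \<Rightarrow> (nat \<Rightarrow> nat \<Rightarrow> real) \<Rightarrow> nat \<Rightarrow> real" where
  "Delta P pl ph T C psi t = measure_pmf.expectation (Sdist P psi C t)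
     (\<lambda>s. Vval P pl ph T s t - Qval P (Vval P pl ph T) s t (psi s t))"

definition l1dist :: "nat \<Rightarrow> nat pmf \<Rightarrow> nat pmf \<Rightarrow> real" where
  "l1dist s A B = (\<Sum>q\<le>s. \<bar>pmf A q - pmf B q\<bar>)"

definition states :: "nat \<Rightarrow> nat \<Rightarrow> (nat \<times> nat) set" where
  "states C T = {..C} \<times> {1..T+1}"

definition supnorm :: "nat \<Rightarrow> nat \<Rightarrow> (nat \<Rightarrow> nat \<Rightarrow> real) \<Rightarrow> (nat \<Rightarrow> nat \<Rightarrow> real) \<Rightarrow> real" where
  "supnorm C T V W = (MAX x\<in>states C T. \<bar>V (fst x) (snd x) - W (fst x) (snd x)\<bar>)"

definition deltaP :: "nat \<Rightarrow> nat \<Rightarrow> real \<Rightarrow> real \<Rightarrow> (nat \<Rightarrow> real \<Rightarrow> nat pmf) \<Rightarrow> (nat \<Rightarrow> real \<Rightarrow> nat pmf) \<Rightarrow> real" where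
  "deltaP C T pl ph Ph P = (SUP x\<in>{(s,t,p). (s,t) \<in> states C T \<and> p \<in> {pl..ph}}.
      l1dist (fst x) (Ph (fst x) (snd (snd x))) (P (fst x) (snd (snd x))))"

end

theory Submission
  imports Defs
begin

lemma Esum:
  fixes f :: "nat \<Rightarrow> real"
  assumes "set_pmf M \<subseteq> {..s}"
  shows "measure_pmf.expectation M f = (\<Sum>q\<le>s. pmf M q * f q)"
  using assms by (subst integral_measure_pmf[where A="{..s}"]) auto

lemma sum_bound:
  fixes f :: "nat \<Rightarrow> real"
  assumes "set_pmf M \<subseteq> {..s}" and "\<And>q. q \<le> s \<Longrightarrow> \<bar>f q\<bar> \<le> b"
  shows "\<bar>\<Sum>q\<le>s. pmf M q * f q\<bar> \<le> b"
proof -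
  have "\<bar>\<Sum>q\<le>s. pmf M q * f q\<bar> \<le> (\<Sum>q\<le>s. \<bar>pmf M q * f q\<bar>)" by (rule sum_abs)
  also have "\<dots> \<le> (\<Sum>q\<le>s. pmf M q * b)"
    by (rule sum_mono) (simp add: abs_mult assms(2) mult_left_mono)
  also have "\<dots> = b * (\<Sum>q\<le>s. pmf M q)" by (simp add: sum_distrib_left mult.commute)
  also have "(\<Sum>q\<le>s. pmf M q) = 1" using assms(1) by (intro sum_pmf_eq_1) auto
  finally show ?thesis by simp
qed

lemma sum_bound2:
  fixes f :: "nat \<Rightarrow> real"
  assumes "set_pmf M \<subseteq> {..s}" and "\<And>q. q \<le> s \<Longrightarrow> a \<le> f q \<and> f q \<le> b"
  shows "a \<le> (\<Sum>q\<le>s. pmf M q * f q) \<and> (\<Sum>q\<le>s. pmf M q * f q) \<le> b"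
proof -
  have one: "(\<Sum>q\<le>s. pmf M q) = 1" using assms(1) by (intro sum_pmf_eq_1) auto
  have "(\<Sum>q\<le>s. pmf M q * a) \<le> (\<Sum>q\<le>s. pmf M q * f q)"
    by (rule sum_mono) (simp add: assms(2) mult_left_mono)
  moreover have "(\<Sum>q\<le>s. pmf M q * f q) \<le> (\<Sum>q\<le>s. pmf M q * b)"
    by (rule sum_mono) (simp add: assms(2) mult_left_mono)
  moreover have "(\<Sum>q\<le>s. pmf M q * a) = a" "(\<Sum>q\<le>s. pmf M q * b) = b"
    using one by (simp_all add: sum_distrib_right[symmetric])
  ultimately show ?thesis by simp
qed

lemma vbound:
  fixes Pm :: "nat \<Rightarrow> real \<Rightarrow> nat pmf"
  assumes supp: "\<And>s p. s \<le> C \<Longrightarrow> p \<in> {pl..ph} \<Longrightarrow> set_pmf (Pm s p) \<subseteq> {..s}"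
    and pl: "0 < pl" "pl \<le> ph"
  shows "s \<le> C \<Longrightarrow> 0 \<le> vfun Pm pl ph k s \<and> vfun Pm pl ph k s \<le> real k * ph * real s"
proof (induction k arbitrary: s)
  case 0
  then show ?case by simp
next
  case (Suc k)
  define g where "g p = measure_pmf.expectation (Pm s p) (\<lambda>q. p * real q + vfun Pm pl ph k (s - q))" for p
  have gb: "0 \<le> g p \<and> g p \<le> real (Suc k) * ph * real s" if p: "p \<in> {pl..ph}" for p
  proof -
    have sp: "set_pmf (Pm s p) \<subseteq> {..s}" using supp Suc.prems p by auto
    have "0 \<le> p * real q + vfun Pm pl ph k (s - q) \<and> p * real q + vfun Pm pl ph k (s - q) \<le> real (Suc k) * ph * real s"
      if q: "q \<le> s" for q
    proof -
      have ih: "0 \<le> vfun Pm pl ph k (s - q) \<and> vfun Pm pl ph k (s - q) \<le> real k * ph * real (s - q)"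
        using Suc.IH Suc.prems by auto
      have p0: "0 \<le> p" "p \<le> ph" using p pl by auto
      have "p * real q \<le> ph * real q" using p0 by (simp add: mult_right_mono)
      also have "\<dots> \<le> ph * real s" using q p0 by (simp add: mult_left_mono)
      finally have a: "p * real q \<le> ph * real s" .
      have "real k * ph * real (s - q) \<le> real k * ph * real s"
        using q p0 by (intro mult_left_mono) auto
      moreover have "0 \<le> p * real q" using p0 by simp
      ultimately show ?thesis using ih a by (simp add: algebra_simps)
    qed
    then show ?thesis unfolding g_def Esum[OF sp] by (intro sum_bound2[OF sp]) auto
  qed
  have ne: "{pl..ph} \<noteq> {}" using pl by auto
  have bdd: "bdd_above (g ` {pl..ph})" using gb by (intro bdd_aboveI2[where M="real (Suc k) * ph * real s"]) auto
  have v: "vfun Pm pl ph (Suc k) s = (SUP p\<in>{pl..ph}. g p)" by (simp add: g_def)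
  have "0 \<le> (SUP p\<in>{pl..ph}. g p)"
    using gb[of pl] pl by (intro cSUP_upper2[OF bdd, of pl]) auto
  moreover have "(SUP p\<in>{pl..ph}. g p) \<le> real (Suc k) * ph * real s"
    using gb by (intro cSUP_least[OF ne]) auto
  ultimately show ?case using v by simp
qed

lemma sdist_supp: "set_pmf (sdist P psi C k) \<subseteq> {..C}"
  by (induction k) auto

theorem lemma3:
  fixes C T :: nat and pl ph :: real
    and P :: "nat \<Rightarrow> real \<Rightarrow> nat pmf"
    and Phat :: "nat \<Rightarrow> nat \<Rightarrow> real \<Rightarrow> nat pmf"
    and psi :: "nat \<Rightarrow> nat \<Rightarrow> nat \<Rightarrow> real"
  assumes "0 < pl" and "pl < ph"
    and P_supp: "\<And>s p. s \<le> C \<Longrightarrow> p \<in> {pl..ph} \<Longrightarrow> set_pmf (P s p) \<subseteq> {..s}"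
    and Phat_supp: "\<And>n s p. s \<le> C \<Longrightarrow> p \<in> {pl..ph} \<Longrightarrow> set_pmf (Phat n s p) \<subseteq> {..s}"
    and psi_range: "\<And>n s t. s \<le> C \<Longrightarrow> 1 \<le> t \<Longrightarrow> t \<le> T \<Longrightarrow> psi n s t \<in> {pl..ph}"
    and psi_opt: "\<And>n s t. s \<le> C \<Longrightarrow> 1 \<le> t \<Longrightarrow> t \<le> T \<Longrightarrow>
        Qval (Phat n) (Vval (Phat n) pl ph T) s t (psi n s t) = Vval (Phat n) pl ph T s t"
    and "1 \<le> t" and "t \<le> T"
  shows "\<bar>Delta P pl ph T C (psi n) t\<bar>
     \<le> 2 * supnorm C T (Vval (Phat n) pl ph T) (Vval P pl ph T)
       + real (T - t + 1) * (ph * real C) * deltaP C T pl ph (Phat n) P"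
proof -
  define Vh where "Vh = Vval (Phat n) pl ph T"
  define Vs where "Vs = Vval P pl ph T"
  define N where "N = supnorm C T Vh Vs"
  define D where "D = deltaP C T pl ph (Phat n) P"
  define M where "M = real (T - t + 1) * (ph * real C)"
  have pl: "0 < pl" "pl \<le> ph" using assms by auto
  have Nb: "\<bar>Vh x y - Vs x y\<bar> \<le> N" if "x \<le> C" "1 \<le> y" "y \<le> T + 1" for x y
  proof -
    have "finite (states C T)" by (simp add: states_def)
    moreover have "(x, y) \<in> states C T" using that by (simp add: states_def)
    ultimately show ?thesis unfolding N_def supnorm_def
      by (metis (no_types, lifting) Max_ge finite_imageI fst_conv image_eqI snd_conv)
  qed
  have l1le: "l1dist s (Phat n s p) (P s p) \<le> 2" if "s \<le> C" "p \<in> {pl..ph}" for s p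
  proof -
    have "l1dist s (Phat n s p) (P s p) \<le> (\<Sum>q\<le>s. pmf (Phat n s p) q + pmf (P s p) q)"
      unfolding l1dist_def by (rule sum_mono) (simp add: abs_le_iff)
    also have "\<dots> = 2"
      using sum_pmf_eq_1[of "{..s}" "Phat n s p"] sum_pmf_eq_1[of "{..s}" "P s p"]
        Phat_supp[OF that] P_supp[OF that] by (simp add: sum.distrib)
    finally show ?thesis .
  qed
  have Db: "l1dist s (Phat n s p) (P s p) \<le> D" if "s \<le> C" "p \<in> {pl..ph}" for s p
  proof -
    let ?A = "{(s,t,p). (s,t) \<in> states C T \<and> p \<in> {pl..ph}}"
    let ?f = "\<lambda>x. l1dist (fst x) (Phat n (fst x) (snd (snd x))) (P (fst x) (snd (snd x)))"
    have bdd: "bdd_above (?f ` ?A)"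
      by (rule bdd_aboveI2[where M=2]) (auto simp: states_def intro!: l1le)
    have mem: "(s, 1, p) \<in> ?A" using that by (auto simp: states_def)
    show ?thesis unfolding D_def deltaP_def using cSUP_upper[OF mem bdd] by simp
  qed
  have N0: "0 \<le> N" using Nb[of 0 1] by simp
  have D0: "0 \<le> D"
  proof -
    have "0 \<le> l1dist 0 (Phat n 0 pl) (P 0 pl)" unfolding l1dist_def by (rule sum_nonneg) simp
    then show ?thesis using Db[of 0 pl] pl by simp
  qed
  have M0: "0 \<le> M" using pl by (simp add: M_def)
  have pw: "\<bar>Vs s t - Qval P Vs s t (psi n s t)\<bar> \<le> 2 * N + M * D" if s: "s \<le> C" for s
  proof -
    define p where "p = psi n s t"
    have p: "p \<in> {pl..ph}" using psi_range s assms by (simp add: p_def)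
    have sh: "set_pmf (Phat n s p) \<subseteq> {..s}" using Phat_supp s p by auto
    have sP: "set_pmf (P s p) \<subseteq> {..s}" using P_supp s p by auto
    define f where "f q = p * real q + Vh (s - q) (t + 1)" for q
    define f2 where "f2 q = p * real q + Vs (s - q) (t + 1)" for q
    have Q1: "Qval (Phat n) Vh s t p = (\<Sum>q\<le>s. pmf (Phat n s p) q * f q)"
      unfolding Qval_def f_def by (rule Esum[OF sh])
    have Q2: "Qval P Vh s t p = (\<Sum>q\<le>s. pmf (P s p) q * f q)"
      unfolding Qval_def f_def by (rule Esum[OF sP])
    have Q3: "Qval P Vs s t p = (\<Sum>q\<le>s. pmf (P s p) q * f2 q)"
      unfolding Qval_def f2_def by (rule Esum[OF sP])
    have opt: "Qval (Phat n) Vh s t p = Vh s t"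
      unfolding Vh_def p_def using psi_opt s assms by simp
    have fb: "\<bar>f q\<bar> \<le> M" if q: "q \<le> s" for q
    proof -
      have vb: "0 \<le> vfun (Phat n) pl ph (T - t) (s - q) \<and> vfun (Phat n) pl ph (T - t) (s - q) \<le> real (T - t) * ph * real (s - q)"
        using vbound[of C pl ph "Phat n", OF Phat_supp pl, of "s - q" "T - t"] s q by simp
      have e: "Vh (s - q) (t + 1) = vfun (Phat n) pl ph (T - t) (s - q)"
        by (simp add: Vh_def Vval_def)
      have "real (T - t) * ph * real (s - q) \<le> real (T - t) * ph * real C"
        using q s pl by (intro mult_left_mono) auto
      moreover have "p * real q \<le> ph * real C"
        using p q s pl by (intro mult_mono) auto
      moreover have "0 \<le> p * real q" using p pl by simp
      moreover have "M = real (T - t) * ph * real C + ph * real C"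
        using assms by (simp add: M_def algebra_simps)
      ultimately show ?thesis using vb e unfolding f_def by (simp add: abs_le_iff)
    qed
    have t1: "\<bar>Vs s t - Vh s t\<bar> \<le> N" using Nb[of s t] s assms by (simp add: abs_minus_commute)
    have "Qval (Phat n) Vh s t p - Qval P Vh s t p = (\<Sum>q\<le>s. (pmf (Phat n s p) q - pmf (P s p) q) * f q)"
      unfolding Q1 Q2 by (simp add: sum_subtractf[symmetric] algebra_simps)
    also have "\<bar>\<dots>\<bar> \<le> (\<Sum>q\<le>s. \<bar>pmf (Phat n s p) q - pmf (P s p) q\<bar> * M)"
      by (rule order_trans[OF sum_abs], rule sum_mono) (simp add: abs_mult fb mult_left_mono)
    also have "\<dots> = M * l1dist s (Phat n s p) (P s p)"
      by (simp add: l1dist_def sum_distrib_left mult.commute)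
    also have "\<dots> \<le> M * D" using Db[OF s p] M0 by (simp add: mult_left_mono)
    finally have t2: "\<bar>Qval (Phat n) Vh s t p - Qval P Vh s t p\<bar> \<le> M * D" .
    have "Qval P Vh s t p - Qval P Vs s t p = (\<Sum>q\<le>s. pmf (P s p) q * (f q - f2 q))"
      unfolding Q2 Q3 by (simp add: sum_subtractf[symmetric] algebra_simps)
    also have "\<bar>\<dots>\<bar> \<le> N"
      using s assms by (intro sum_bound[OF sP]) (auto simp: f_def f2_def intro!: Nb)
    finally have t3: "\<bar>Qval P Vh s t p - Qval P Vs s t p\<bar> \<le> N" .
    have "Vs s t - Qval P Vs s t p = (Vs s t - Vh s t) + (Qval (Phat n) Vh s t p - Qval P Vh s t p)
        + (Qval P Vh s t p - Qval P Vs s t p)" using opt by simp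
    then show ?thesis using t1 t2 t3 unfolding p_def by (simp add: abs_le_iff)
  qed
  have sd: "set_pmf (Sdist P (psi n) C t) \<subseteq> {..C}" by (simp add: Sdist_def sdist_supp)
  have "Delta P pl ph T C (psi n) t = (\<Sum>s\<le>C. pmf (Sdist P (psi n) C t) s * (Vs s t - Qval P Vs s t (psi n s t)))"
    unfolding Delta_def Vs_def by (rule Esum[OF sd])
  also have "\<bar>\<dots>\<bar> \<le> 2 * N + M * D" by (intro sum_bound[OF sd] pw)
  finally show ?thesis by (simp add: N_def D_def M_def Vh_def Vs_def)
qed

end
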